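(* Let $D$ be a centrally finite division algebra and let $R=D[t_1,\ldots,t_n]$ be the ring of polynomials in $n$ central commuting variables over $D$. Then for every finite subset $A$ of $R$, the subring $S=D[A]$ of $R$ generated by $D\cup A$ is centrally normalizable over $D$.
   Context: All rings are associative with unity. A division algebra is centrally finite if it is finite-dimensional over its center. A ring $S$ containing $D$ is finite over a subring $R'$ if $S$ is finitely generated as a left $R'$-module. Commuting elements $a_1,\ldots,a_m\in S$ are (left) algebraically independent over $D$ if the monomials $a_1^{i_1}\cdots a_m^{i_m}$ are left linearly independent over $D$. $S$ is centrally normalizable over $D$ if there exist $m\ge0$ and commuting elements $a_1,\ldots,a_m\in S$ with $a_ib=ba_i$ for all $b\in D$, which are left algebraically independent over $D$, and such that $S$ is finite over the subring $D[a_1,\ldots,a_m]$ generated by $D\cup\{a_1,\ldots,a_m\}$. *)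

theory Defs
  imports Main "HOL-Library.Poly_Mapping"
begin

definition center :: "'a::ring_1 set" where
  "center = {z. \<forall>x. z * x = x * z}"

definition centrally_finite :: "'a::division_ring itself \<Rightarrow> bool" where
  "centrally_finite _ \<longleftrightarrow>
     (\<exists>B::'a set. finite B \<and>
        (\<forall>d::'a. \<exists>c. (\<forall>b\<in>B. c b \<in> center) \<and> d = (\<Sum>b\<in>B. c b * b)))"

(* Polynomials over D in central commuting variables t_0, t_1, ...:
   a polynomial is a finitely supported map from monomials (exponent vectors
   nat \<Rightarrow>\<^sub>0 nat) to coefficients; multiplication is convolution. *)
type_synonym 'a mpoly = "(nat \<Rightarrow>\<^sub>0 nat) \<Rightarrow>\<^sub>0 'a"

definition const :: "'a::zero \<Rightarrow> 'a mpoly" where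
  "const d = Poly_Mapping.single 0 d"

definition var :: "nat \<Rightarrow> 'a::{zero,one} mpoly" where
  "var i = Poly_Mapping.single (Poly_Mapping.single i 1) 1"

(* R = D[t_0,...,t_{n-1}]: polynomials involving only the first n variables *)
definition poly_ring :: "nat \<Rightarrow> ('a::division_ring) mpoly set" where
  "poly_ring n = {p. \<forall>m\<in>Poly_Mapping.keys p. \<forall>i\<in>Poly_Mapping.keys m. i < n}"

inductive_set gen_subring :: "('a::ring_1) mpoly set \<Rightarrow> 'a mpoly set"
  for A :: "'a mpoly set" where
  gen_const: "const d \<in> gen_subring A"
| gen_elem: "a \<in> A \<Longrightarrow> a \<in> gen_subring A"
| gen_add: "p \<in> gen_subring A \<Longrightarrow> q \<in> gen_subring A \<Longrightarrow> p + q \<in> gen_subring A"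
| gen_neg: "p \<in> gen_subring A \<Longrightarrow> - p \<in> gen_subring A"
| gen_mult: "p \<in> gen_subring A \<Longrightarrow> q \<in> gen_subring A \<Longrightarrow> p * q \<in> gen_subring A"

definition monomial_in :: "nat \<Rightarrow> (nat \<Rightarrow> 'a::monoid_mult) \<Rightarrow> (nat \<Rightarrow> nat) \<Rightarrow> 'a" where
  "monomial_in m a e = prod_list (map (\<lambda>i. a i ^ e i) [0..<m])"

(* a_0,...,a_{m-1} are left algebraically independent over D:
   the monomials are left linearly independent over D (embedded as constants) *)
definition alg_indep :: "nat \<Rightarrow> (nat \<Rightarrow> ('a::ring_1) mpoly) \<Rightarrow> bool" where
  "alg_indep m a \<longleftrightarrow>
     (\<forall>c :: (nat \<Rightarrow> nat) \<Rightarrow> 'a.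
        finite {e. c e \<noteq> 0} \<longrightarrow>
        (\<forall>e. c e \<noteq> 0 \<longrightarrow> (\<forall>i\<ge>m. e i = 0)) \<longrightarrow>
        (\<Sum>e\<in>{e. c e \<noteq> 0}. const (c e) * monomial_in m a e) = 0 \<longrightarrow>
        (\<forall>e. c e = 0))"

definition finite_over :: "('a::ring_1) set \<Rightarrow> 'a set \<Rightarrow> bool" where
  "finite_over S R' \<longleftrightarrow>
     (\<exists>F. finite F \<and> F \<subseteq> S \<and>
        (\<forall>s\<in>S. \<exists>r. (\<forall>f\<in>F. r f \<in> R') \<and> s = (\<Sum>f\<in>F. r f * f)))"

definition centrally_normalizable :: "('a::ring_1) mpoly set \<Rightarrow> bool" where
  "centrally_normalizable S \<longleftrightarrow>
     (\<exists>m. \<exists>a :: nat \<Rightarrow> 'a mpoly.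
        (\<forall>i<m. a i \<in> S) \<and>
        (\<forall>i<m. \<forall>j<m. a i * a j = a j * a i) \<and>
        (\<forall>i<m. \<forall>b. a i * const b = const b * a i) \<and>
        alg_indep m a \<and>
        finite_over S (gen_subring (a ` {..<m})))"

end

theory Submission
  imports Defs
begin

lemma update_eq_add: "Poly_Mapping.lookup f a = 0 \<Longrightarrow> Poly_Mapping.update a b f = f + Poly_Mapping.single a b"
  by (rule poly_mapping_eqI) (auto simp: lookup_update lookup_add lookup_single when_def)

lemma pm_induct[case_names zero add]:
  assumes "P 0" "\<And>f a b. Poly_Mapping.lookup f a = 0 \<Longrightarrow> P f \<Longrightarrow> P (f + Poly_Mapping.single a b)"
  shows "P f"
  using assms
  by (induction f rule: Poly_Mapping.update_induct) (auto simp: update_eq_add in_keys_iff)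

lemma const_mult_single: "const d * Poly_Mapping.single a b = Poly_Mapping.single a (d * b)"
  unfolding const_def by (simp add: mult_single)

lemma single_mult_const: "Poly_Mapping.single a b * const d = Poly_Mapping.single a (b * d)"
  unfolding const_def by (simp add: mult_single)

lemma lookup_const_mult: "Poly_Mapping.lookup (const d * (p::'a::ring_1 mpoly)) k = d * Poly_Mapping.lookup p k"
  by (induction p rule: pm_induct) (auto simp: distrib_left lookup_add const_mult_single lookup_single when_def)

lemma lookup_mult_const: "Poly_Mapping.lookup ((p::'a::ring_1 mpoly) * const d) k = Poly_Mapping.lookup p k * d"
  by (induction p rule: pm_induct) (auto simp: distrib_right lookup_add single_mult_const lookup_single when_def)

lemma var_central: "Poly_Mapping.single m 1 * (p::'a::ring_1 mpoly) = p * Poly_Mapping.single m 1"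
  by (induction p rule: pm_induct) (auto simp: distrib_left distrib_right mult_single add.commute)

lemma const_mult_const: "const a * const b = const (a * b)"
  unfolding const_def by (simp add: mult_single)
lemma const_one: "const 1 = 1" unfolding const_def by simp
lemma const_zero: "const 0 = 0" unfolding const_def by simp
lemma const_add: "const (a + b) = const a + const b" unfolding const_def by (simp add: single_add)
lemma const_uminus: "const (- a) = - const a" unfolding const_def by (simp add: single_uminus)
lemma const_diff: "const (a - b) = const a - const b" unfolding const_def by (simp add: single_diff)

definition central :: "'b::ring_1 \<Rightarrow> bool" where
  "central z \<longleftrightarrow> (\<forall>y. z * y = y * z)"

lemma const_comm_central:
  fixes z :: "'a::ring_1 mpoly"
  assumes "\<And>d. z * const d = const d * z"
  shows "central z"
  unfolding central_def
proof
  fix p :: "'a mpoly"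
  show "z * p = p * z"
  proof (induction p rule: pm_induct)
    case zero then show ?case by simp
  next
    case (add f a b)
    have s: "Poly_Mapping.single a b = const b * Poly_Mapping.single a 1"
      by (simp add: const_mult_single)
    have "z * Poly_Mapping.single a b = Poly_Mapping.single a b * z"
      unfolding s by (metis assms mult.assoc var_central)
    then show ?case using add by (simp add: distrib_left distrib_right)
  qed
qed


lemma gen_zero: "0 \<in> gen_subring X"
  using gen_const[of 0 X] by (simp add: const_zero)
lemma gen_one: "1 \<in> gen_subring X"
  using gen_const[of 1 X] by (simp add: const_one)
lemma gen_diff: "p \<in> gen_subring X \<Longrightarrow> q \<in> gen_subring X \<Longrightarrow> p - q \<in> gen_subring X"
  using gen_add[OF _ gen_neg] by (metis diff_conv_add_uminus)
lemma gen_pow: "p \<in> gen_subring X \<Longrightarrow> p ^ k \<in> gen_subring X"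
  by (induction k) (auto intro: gen_one gen_mult)
lemma gen_sum: "finite I \<Longrightarrow> (\<And>i. i \<in> I \<Longrightarrow> f i \<in> gen_subring X) \<Longrightarrow> sum f I \<in> gen_subring X"
  by (induction I rule: finite_induct) (auto intro: gen_zero gen_add)

lemma gen_least:
  assumes "\<And>d. const d \<in> T" "X \<subseteq> T" "\<And>p q. p \<in> T \<Longrightarrow> q \<in> T \<Longrightarrow> p + q \<in> T"
    "\<And>p. p \<in> T \<Longrightarrow> - p \<in> T" "\<And>p q. p \<in> T \<Longrightarrow> q \<in> T \<Longrightarrow> p * q \<in> T"
  shows "gen_subring X \<subseteq> T"
proof
  fix x assume "x \<in> gen_subring X" then show "x \<in> T"
    by (induction rule: gen_subring.induct) (use assms in auto)
qed

lemma gen_closure: "X \<subseteq> gen_subring Y \<Longrightarrow> gen_subring X \<subseteq> gen_subring Y"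
  by (rule gen_least) (auto intro: gen_subring.intros)

lemma gen_mono: "X \<subseteq> Y \<Longrightarrow> gen_subring X \<subseteq> gen_subring Y"
  by (rule gen_closure) (auto intro: gen_elem)

section \<open>Central elements via minimal support\<close>

lemma exists_central_elt:
  fixes s :: "'a::division_ring mpoly"
  assumes sS: "s \<in> gen_subring A" and smu: "Poly_Mapping.lookup s \<mu> \<noteq> 0"
  shows "\<exists>e\<in>gen_subring A. central e \<and> Poly_Mapping.lookup e \<mu> = 1 \<and> Poly_Mapping.keys e \<subseteq> Poly_Mapping.keys s"
proof -
  let ?Q = "\<lambda>e. e \<in> gen_subring A \<and> Poly_Mapping.lookup e \<mu> = 1 \<and> Poly_Mapping.keys e \<subseteq> Poly_Mapping.keys s"
  define e0 where "e0 = const (inverse (Poly_Mapping.lookup s \<mu>)) * s"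
  have "?Q e0"
  proof (intro conjI)
    show "e0 \<in> gen_subring A" unfolding e0_def using sS by (auto intro: gen_mult gen_const)
    show "Poly_Mapping.lookup e0 \<mu> = 1" unfolding e0_def using smu by (simp add: lookup_const_mult)
    show "Poly_Mapping.keys e0 \<subseteq> Poly_Mapping.keys s"
    proof
      fix x :: "nat \<Rightarrow>\<^sub>0 nat" assume "x \<in> Poly_Mapping.keys e0"
      then have "inverse (Poly_Mapping.lookup s \<mu>) * Poly_Mapping.lookup s x \<noteq> 0"
        unfolding e0_def by (simp add: lookup_const_mult in_keys_iff)
      then show "x \<in> Poly_Mapping.keys s" by (simp add: in_keys_iff)
    qed
  qed
  then obtain e where Qe: "?Q e" and emin: "\<And>y. ?Q y \<Longrightarrow> card (Poly_Mapping.keys e) \<le> card (Poly_Mapping.keys y)"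
    using ex_has_least_nat[of ?Q e0 "\<lambda>e. card (Poly_Mapping.keys e)"] by blast
  have comm: "e * const d = const d * e" for d
  proof (cases "d = 0")
    case True then show ?thesis by (simp add: const_zero)
  next
    case False
    define b where "b = const d * e * const (inverse d) - e"
    have lb: "Poly_Mapping.lookup b k = d * Poly_Mapping.lookup e k * inverse d - Poly_Mapping.lookup e k" for k
      unfolding b_def by (simp add: lookup_minus lookup_mult_const lookup_const_mult)
    have b0: "b = 0"
    proof (rule ccontr)
      assume "b \<noteq> 0"
      then obtain \<nu> where bnu: "Poly_Mapping.lookup b \<nu> \<noteq> 0"
        by (metis in_keys_iff keys_eq_empty ex_in_conv)
      have enu: "Poly_Mapping.lookup e \<nu> \<noteq> 0" using bnu lb[of \<nu>] by auto
      have bmu: "Poly_Mapping.lookup b \<mu> = 0" using lb[of \<mu>] Qe False by simp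
      have bS: "b \<in> gen_subring A" unfolding b_def using Qe
        by (auto intro!: gen_diff gen_mult gen_const)
      define e' where "e' = e - const (Poly_Mapping.lookup e \<nu> * inverse (Poly_Mapping.lookup b \<nu>)) * b"
      have le': "Poly_Mapping.lookup e' k = Poly_Mapping.lookup e k - Poly_Mapping.lookup e \<nu> * inverse (Poly_Mapping.lookup b \<nu>) * Poly_Mapping.lookup b k" for k
        unfolding e'_def by (simp add: lookup_minus lookup_const_mult mult.assoc)
      have "Poly_Mapping.keys e' \<subseteq> Poly_Mapping.keys e - {\<nu>}"
      proof
        fix k assume "k \<in> Poly_Mapping.keys e'"
        then have k: "Poly_Mapping.lookup e' k \<noteq> 0" by (simp add: in_keys_iff)
        have "k \<noteq> \<nu>" using k le'[of \<nu>] bnu by (auto simp: mult.assoc)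
        moreover have "Poly_Mapping.lookup e k \<noteq> 0" using k le'[of k] lb[of k] by auto
        ultimately show "k \<in> Poly_Mapping.keys e - {\<nu>}" by (simp add: in_keys_iff)
      qed
      moreover have "?Q e'"
      proof -
        have "e' \<in> gen_subring A" unfolding e'_def using Qe bS by (auto intro!: gen_diff gen_mult gen_const)
        moreover have "Poly_Mapping.lookup e' \<mu> = 1" using le'[of \<mu>] bmu Qe by simp
        ultimately show ?thesis using \<open>Poly_Mapping.keys e' \<subseteq> Poly_Mapping.keys e - {\<nu>}\<close> Qe by auto
      qed
      moreover have "card (Poly_Mapping.keys e - {\<nu>}) < card (Poly_Mapping.keys e)"
        using enu by (intro card_Diff1_less) (auto simp: in_keys_iff)
      ultimately have "card (Poly_Mapping.keys e') < card (Poly_Mapping.keys e)"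
        by (meson card_mono finite_Diff finite_keys le_less_trans)
      with emin[OF \<open>?Q e'\<close>] show False by simp
    qed
    then have "const d * e * const (inverse d) = e" unfolding b_def by simp
    then have "const d * e * const (inverse d) * const d = e * const d" by simp
    then show ?thesis using False by (simp add: mult.assoc const_mult_const const_one)
  qed
  show ?thesis using Qe const_comm_central[OF comm] by blast
qed

lemma central_gen:
  fixes A :: "'a::division_ring mpoly set"
  assumes "finite T"
  shows "\<forall>s\<in>gen_subring A. Poly_Mapping.keys s \<subseteq> T \<longrightarrow>
    (\<exists>Z. finite Z \<and> Z \<subseteq> gen_subring A \<and> (\<forall>z\<in>Z. central z) \<and> s \<in> gen_subring Z)"
  using assms
proof (induction T rule: finite_induct)
  case empty
  show ?case
  proof (intro ballI impI)
    fix s :: "'a mpoly" assume "Poly_Mapping.keys s \<subseteq> {}"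
    then have "s = 0" by simp
    then show "\<exists>Z. finite Z \<and> Z \<subseteq> gen_subring A \<and> (\<forall>z\<in>Z. central z) \<and> s \<in> gen_subring Z"
      using gen_zero[of "{}"] by (intro exI[of _ "{}"]) simp
  qed
next
  case (insert \<mu> T)
  show ?case
  proof (intro ballI impI)
    fix s assume sS: "s \<in> gen_subring A" and ks: "Poly_Mapping.keys s \<subseteq> insert \<mu> T"
    show "\<exists>Z. finite Z \<and> Z \<subseteq> gen_subring A \<and> (\<forall>z\<in>Z. central z) \<and> s \<in> gen_subring Z"
    proof (cases "Poly_Mapping.lookup s \<mu> = 0")
      case True
      then have "Poly_Mapping.keys s \<subseteq> T" using ks by (auto simp: in_keys_iff)
      then show ?thesis using insert.IH sS by blast
    next
      case False
      obtain e where eS: "e \<in> gen_subring A" and ce: "central e" and e1: "Poly_Mapping.lookup e \<mu> = 1"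
        and ke: "Poly_Mapping.keys e \<subseteq> Poly_Mapping.keys s"
        using exists_central_elt[OF sS False] by blast
      define s' where "s' = s - const (Poly_Mapping.lookup s \<mu>) * e"
      have s'S: "s' \<in> gen_subring A" unfolding s'_def using sS eS by (intro gen_diff gen_mult gen_const)
      have "Poly_Mapping.keys s' \<subseteq> T"
      proof
        fix k assume "k \<in> Poly_Mapping.keys s'"
        then have k: "Poly_Mapping.lookup s' k \<noteq> 0" by (simp add: in_keys_iff)
        have ls: "Poly_Mapping.lookup s' k = Poly_Mapping.lookup s k - Poly_Mapping.lookup s \<mu> * Poly_Mapping.lookup e k"
          unfolding s'_def by (simp add: lookup_minus lookup_const_mult)
        have "k \<noteq> \<mu>" using k ls e1 by auto
        moreover have "k \<in> Poly_Mapping.keys s \<or> k \<in> Poly_Mapping.keys e" using k ls by (auto simp: in_keys_iff)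
        ultimately show "k \<in> T" using ks ke by auto
      qed
      then obtain Z where Z: "finite Z" "Z \<subseteq> gen_subring A" "\<forall>z\<in>Z. central z" "s' \<in> gen_subring Z"
        using insert.IH[rule_format, OF s'S] by blast
      have "s = s' + const (Poly_Mapping.lookup s \<mu>) * e" unfolding s'_def by simp
      moreover have "s' \<in> gen_subring (insert e Z)" using Z gen_mono[of Z "insert e Z"] by auto
      moreover have "e \<in> gen_subring (insert e Z)" by (auto intro: gen_elem)
      ultimately have "s \<in> gen_subring (insert e Z)"
        by (metis gen_add gen_mult gen_const)
      then show ?thesis using Z eS ce by (intro exI[of _ "insert e Z"]) auto
    qed
  qed
qed

definition lspan :: "'b::ring_1 set \<Rightarrow> 'b set \<Rightarrow> 'b set" where
  "lspan R F = {s. \<exists>r. (\<forall>f\<in>F. r f \<in> R) \<and> s = (\<Sum>f\<in>F. r f * f)}"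

lemma finite_over_iff: "finite_over S R \<longleftrightarrow> (\<exists>F. finite F \<and> F \<subseteq> S \<and> S \<subseteq> lspan R F)"
  unfolding finite_over_def lspan_def by blast

context
  fixes X :: "'a::ring_1 mpoly set"
begin

lemma lspan_zero: "0 \<in> lspan (gen_subring X) F"
  unfolding lspan_def by (rule CollectI, rule exI[of _ "\<lambda>_. 0"]) (simp add: gen_zero)

lemma lspan_add:
  assumes "x \<in> lspan (gen_subring X) F" "y \<in> lspan (gen_subring X) F"
  shows "x + y \<in> lspan (gen_subring X) F"
proof -
  obtain r1 where r1: "\<forall>f\<in>F. r1 f \<in> gen_subring X" "x = (\<Sum>f\<in>F. r1 f * f)"
    using assms(1) unfolding lspan_def by blast
  obtain r2 where r2: "\<forall>f\<in>F. r2 f \<in> gen_subring X" "y = (\<Sum>f\<in>F. r2 f * f)"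
    using assms(2) unfolding lspan_def by blast
  show ?thesis unfolding lspan_def
    by (rule CollectI, rule exI[of _ "\<lambda>f. r1 f + r2 f"])
      (use r1 r2 in \<open>auto intro: gen_add simp: distrib_right sum.distrib\<close>)
qed

lemma lspan_lmult:
  assumes "q \<in> gen_subring X" "x \<in> lspan (gen_subring X) F"
  shows "q * x \<in> lspan (gen_subring X) F"
proof -
  obtain r1 where r1: "\<forall>f\<in>F. r1 f \<in> gen_subring X" "x = (\<Sum>f\<in>F. r1 f * f)"
    using assms(2) unfolding lspan_def by blast
  show ?thesis unfolding lspan_def
    by (rule CollectI, rule exI[of _ "\<lambda>f. q * r1 f"])
      (use r1 assms(1) in \<open>auto intro: gen_mult simp: sum_distrib_left mult.assoc\<close>)
qed

lemma lspan_neg: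
  assumes "x \<in> lspan (gen_subring X) F"
  shows "- x \<in> lspan (gen_subring X) F"
  using lspan_lmult[OF gen_neg[OF gen_one] assms] by simp

lemma lspan_term:
  assumes "finite F" "f \<in> F" "q \<in> gen_subring X"
  shows "q * f \<in> lspan (gen_subring X) F"
proof -
  have "(\<Sum>g\<in>F. (if g = f then q else 0) * g) = (\<Sum>g\<in>F. if g = f then q * f else 0)"
    by (rule sum.cong) auto
  also have "\<dots> = q * f" using assms by simp
  finally show ?thesis unfolding lspan_def
    by (intro CollectI exI[of _ "\<lambda>g. if g = f then q else 0"]) (use assms gen_zero in auto)
qed

lemma lspan_sum:
  assumes "finite I" "\<And>i. i \<in> I \<Longrightarrow> x i \<in> lspan (gen_subring X) F"
  shows "sum x I \<in> lspan (gen_subring X) F"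
  using assms by (induction I rule: finite_induct) (auto intro: lspan_zero lspan_add)

lemma lspan_induct:
  assumes "x \<in> lspan (gen_subring X) F" "finite F"
    "0 \<in> M" "\<And>a b. a \<in> M \<Longrightarrow> b \<in> M \<Longrightarrow> a + b \<in> M"
    "\<And>g f. g \<in> gen_subring X \<Longrightarrow> f \<in> F \<Longrightarrow> g * f \<in> M"
  shows "x \<in> M"
proof -
  obtain r1 where r1: "\<forall>f\<in>F. r1 f \<in> gen_subring X" "x = (\<Sum>f\<in>F. r1 f * f)"
    using assms(1) unfolding lspan_def by blast
  have "finite F' \<Longrightarrow> (\<forall>f\<in>F'. r1 f * f \<in> M) \<longrightarrow> (\<Sum>f\<in>F'. r1 f * f) \<in> M" for F'
    by (induction F' rule: finite_induct) (auto intro!: assms(4) simp: assms(3))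
  then show ?thesis using r1 assms by auto
qed

lemma lspan_trans:
  assumes "x \<in> lspan (gen_subring X) F" "finite F" "finite F'"
    "\<And>f. f \<in> F \<Longrightarrow> f \<in> lspan (gen_subring X) F'"
  shows "x \<in> lspan (gen_subring X) F'"
  using assms(1,2) by (rule lspan_induct) (auto intro: lspan_zero lspan_add lspan_lmult assms(4))

end

lemma finite_over_trans:
  fixes S :: "'a::ring_1 mpoly set"
  assumes "finite_over S (gen_subring Y)" "finite_over (gen_subring Y) (gen_subring X)"
    "gen_subring Y \<subseteq> S" "\<And>a b. a \<in> S \<Longrightarrow> b \<in> S \<Longrightarrow> a * b \<in> S"
  shows "finite_over S (gen_subring X)"
proof -
  obtain F where F: "finite F" "F \<subseteq> S" "S \<subseteq> lspan (gen_subring Y) F"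
    using assms(1) unfolding finite_over_iff by blast
  obtain H where H: "finite H" "H \<subseteq> gen_subring Y" "gen_subring Y \<subseteq> lspan (gen_subring X) H"
    using assms(2) unfolding finite_over_iff by blast
  define F' where "F' = (\<lambda>(h, f). h * f) ` (H \<times> F)"
  have fin: "finite F'" unfolding F'_def using F H by simp
  have "F' \<subseteq> S" unfolding F'_def using F H assms(3,4) by (auto simp: subset_iff)
  moreover have "S \<subseteq> lspan (gen_subring X) F'"
  proof
    fix s assume "s \<in> S"
    then have "s \<in> lspan (gen_subring Y) F" using F by auto
    then show "s \<in> lspan (gen_subring X) F'"
    proof (rule lspan_induct[OF _ \<open>finite F\<close>])
      show "0 \<in> lspan (gen_subring X) F'" by (rule lspan_zero)
      show "a + b \<in> lspan (gen_subring X) F'" if "a \<in> lspan (gen_subring X) F'" "b \<in> lspan (gen_subring X) F'" for a b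
        using that by (rule lspan_add)
      fix g f assume g: "g \<in> gen_subring Y" and f: "f \<in> F"
      have "g \<in> lspan (gen_subring X) H" using g H by auto
      then have "g * f \<in> lspan (gen_subring X) F'"
      proof (rule lspan_induct[OF _ \<open>finite H\<close>, where M = "{x. x * f \<in> lspan (gen_subring X) F'}", simplified])
        show "0 \<in> lspan (gen_subring X) F'" by (rule lspan_zero)
        show "(a + b) * f \<in> lspan (gen_subring X) F'" if "a * f \<in> lspan (gen_subring X) F'" "b * f \<in> lspan (gen_subring X) F'" for a b
          using lspan_add[OF that] by (simp add: distrib_right)
        fix q h assume "q \<in> gen_subring X" "h \<in> H"
        then show "q * h * f \<in> lspan (gen_subring X) F'"
          unfolding mult.assoc using f fin by (intro lspan_term) (auto simp: F'_def)
      qed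
      then show "g * f \<in> lspan (gen_subring X) F'" .
    qed
  qed
  ultimately show ?thesis unfolding finite_over_iff using fin by blast
qed

lemma central_pow: "central (x::'b::ring_1) \<Longrightarrow> central (x ^ k)"
  unfolding central_def
proof (induction k)
  case (Suc k) then show ?case by (metis mult.assoc power_Suc)
qed simp

lemma central_diff: "central (x::'b::ring_1) \<Longrightarrow> central y \<Longrightarrow> central (x - y)"
  unfolding central_def by (simp add: left_diff_distrib right_diff_distrib)

lemma centralD: "central x \<Longrightarrow> x * y = y * x"
  unfolding central_def by blast

definition Low :: "'a::ring_1 mpoly set \<Rightarrow> 'a mpoly \<Rightarrow> nat \<Rightarrow> 'a mpoly set" where
  "Low W z K = lspan (gen_subring W) ((\<lambda>j. z ^ j) ` {..<K})"

context
  fixes W :: "'a::ring_1 mpoly set" and z :: "'a mpoly"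
  assumes cz: "central z"
begin

lemma Low_term: "g \<in> gen_subring W \<Longrightarrow> j < K \<Longrightarrow> g * z ^ j \<in> Low W z K"
  unfolding Low_def by (rule lspan_term) auto

lemma Low_zero: "0 \<in> Low W z K" unfolding Low_def by (rule lspan_zero)
lemma Low_add: "x \<in> Low W z K \<Longrightarrow> y \<in> Low W z K \<Longrightarrow> x + y \<in> Low W z K"
  unfolding Low_def by (rule lspan_add)
lemma Low_lmult: "g \<in> gen_subring W \<Longrightarrow> x \<in> Low W z K \<Longrightarrow> g * x \<in> Low W z K"
  unfolding Low_def by (rule lspan_lmult)
lemma Low_neg: "x \<in> Low W z K \<Longrightarrow> - x \<in> Low W z K"
  unfolding Low_def by (rule lspan_neg)
lemma Low_diff: "x \<in> Low W z K \<Longrightarrow> y \<in> Low W z K \<Longrightarrow> x - y \<in> Low W z K"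
  using Low_add[OF _ Low_neg] by (metis diff_conv_add_uminus)
lemma Low_sum: "finite I \<Longrightarrow> (\<And>i. i \<in> I \<Longrightarrow> x i \<in> Low W z K) \<Longrightarrow> sum x I \<in> Low W z K"
  unfolding Low_def by (rule lspan_sum)

lemma Low_induct:
  assumes "x \<in> Low W z K" "0 \<in> M" "\<And>a b. a \<in> M \<Longrightarrow> b \<in> M \<Longrightarrow> a + b \<in> M"
    "\<And>g j. g \<in> gen_subring W \<Longrightarrow> j < K \<Longrightarrow> g * z ^ j \<in> M"
  shows "x \<in> M"
  using assms(1) unfolding Low_def by (rule lspan_induct) (use assms(2-4) in auto)

lemma Low_mono: assumes x: "x \<in> Low W z K" and K: "K \<le> K'" shows "x \<in> Low W z K'"
proof (rule Low_induct[OF x])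
  show "0 \<in> Low W z K'" by (rule Low_zero)
  show "a + b \<in> Low W z K'" if "a \<in> Low W z K'" "b \<in> Low W z K'" for a b using that by (rule Low_add)
  show "g * z ^ j \<in> Low W z K'" if "g \<in> gen_subring W" "j < K" for g j
    using that K by (intro Low_term) auto
qed

lemma Low_zpow: assumes x: "x \<in> Low W z K" shows "z ^ q * x \<in> Low W z (q + K)"
proof -
  have "x \<in> {x. z ^ q * x \<in> Low W z (q + K)}"
  proof (rule Low_induct[OF x])
    show "0 \<in> {x. z ^ q * x \<in> Low W z (q + K)}" by (simp add: Low_zero)
    show "a + b \<in> {x. z ^ q * x \<in> Low W z (q + K)}"
      if "a \<in> {x. z ^ q * x \<in> Low W z (q + K)}" "b \<in> {x. z ^ q * x \<in> Low W z (q + K)}" for a b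
      using that by (simp add: distrib_left Low_add)
    fix g j assume "g \<in> gen_subring W" "j < K"
    moreover have "z ^ q * (g * z ^ j) = g * z ^ (q + j)"
    proof -
      have "z ^ q * (g * z ^ j) = (z ^ q * g) * z ^ j" by (simp add: mult.assoc)
      also have "\<dots> = (g * z ^ q) * z ^ j" using centralD[OF central_pow[OF cz, of q], of g] by simp
      also have "\<dots> = g * z ^ (q + j)" by (simp add: mult.assoc power_add)
      finally show ?thesis .
    qed
    ultimately show "g * z ^ j \<in> {x. z ^ q * x \<in> Low W z (q + K)}" by (simp add: Low_term)
  qed
  then show ?thesis by simp
qed

lemma Low_mult: assumes x: "x \<in> Low W z p" and y: "y \<in> Low W z q" shows "x * y \<in> Low W z (p + q)"
proof -
  have "x \<in> {x. x * y \<in> Low W z (p + q)}"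
  proof (rule Low_induct[OF x])
    show "0 \<in> {x. x * y \<in> Low W z (p + q)}" by (simp add: Low_zero)
    show "a + b \<in> {x. x * y \<in> Low W z (p + q)}"
      if "a \<in> {x. x * y \<in> Low W z (p + q)}" "b \<in> {x. x * y \<in> Low W z (p + q)}" for a b
      using that by (simp add: distrib_right Low_add)
    fix g j assume g: "g \<in> gen_subring W" and j: "j < p"
    have "z ^ j * y \<in> Low W z (j + q)" by (rule Low_zpow[OF y])
    then have "z ^ j * y \<in> Low W z (p + q)" by (rule Low_mono) (use j in simp)
    then show "g * z ^ j \<in> {x. x * y \<in> Low W z (p + q)}"
      unfolding mem_Collect_eq mult.assoc by (rule Low_lmult[OF g])
  qed
  then show ?thesis by simp
qed

definition MonP :: "nat \<Rightarrow> 'a mpoly \<Rightarrow> bool" where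
  "MonP p x \<longleftrightarrow> x - z ^ p \<in> Low W z p"

lemma Mon_pow: "MonP p (z ^ p)" unfolding MonP_def by (simp add: Low_zero)

lemma Mon_mult: assumes "MonP p x" "MonP q y" shows "MonP (p + q) (x * y)"
proof -
  define u where "u = x - z ^ p"
  define v where "v = y - z ^ q"
  have u: "u \<in> Low W z p" and v: "v \<in> Low W z q" using assms unfolding MonP_def u_def v_def by auto
  have "x * y - z ^ (p + q) = z ^ p * v + z ^ q * u + u * v"
    unfolding u_def v_def using centralD[OF central_pow[OF cz, of q], of x]
      centralD[OF central_pow[OF cz, of q], of "z ^ p"]
    by (simp add: algebra_simps power_add)
  moreover have "z ^ p * v \<in> Low W z (p + q)" using Low_zpow[OF v, of p] .
  moreover have "z ^ q * u \<in> Low W z (p + q)" using Low_zpow[OF u, of q] by (simp add: add.commute)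
  moreover have "u * v \<in> Low W z (p + q)" by (rule Low_mult[OF u v])
  ultimately show ?thesis unfolding MonP_def by (simp add: Low_add)
qed

lemma Mon_power: "MonP a x \<Longrightarrow> MonP (k * a) (x ^ k)"
proof (induction k)
  case 0 then show ?case using Mon_pow[of 0] by simp
next
  case (Suc k)
  then have "MonP (a + k * a) (x * x ^ k)" by (intro Mon_mult) auto
  then show ?case by (simp add: add.commute)
qed

lemma Mon_shift: "w \<in> gen_subring W \<Longrightarrow> 0 < a \<Longrightarrow> MonP a (w + z ^ a)"
  unfolding MonP_def using Low_term[of w 0 a] by simp

lemma Mon_Low: "MonP p x \<Longrightarrow> p < K \<Longrightarrow> x \<in> Low W z K"
proof -
  assume "MonP p x" "p < K"
  then have "x - z ^ p \<in> Low W z K" unfolding MonP_def by (intro Low_mono[of _ p K]) auto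
  moreover have "z ^ p \<in> Low W z K" using Low_term[OF gen_one \<open>p < K\<close>] by simp
  ultimately have "(x - z ^ p) + z ^ p \<in> Low W z K" by (rule Low_add)
  then show ?thesis by simp
qed

context
  fixes K assumes zK: "z ^ K \<in> Low W z K"
begin

lemma Low_reduce: "x \<in> Low W z (Suc K) \<Longrightarrow> x \<in> Low W z K"
proof (erule Low_induct)
  show "0 \<in> Low W z K" by (rule Low_zero)
  show "a + b \<in> Low W z K" if "a \<in> Low W z K" "b \<in> Low W z K" for a b using that by (rule Low_add)
  fix g j assume g: "g \<in> gen_subring W" and "j < Suc K"
  then consider "j < K" | "j = K" by linarith
  then show "g * z ^ j \<in> Low W z K"
  proof cases
    case 1 then show ?thesis using g by (rule Low_term[rotated])
  next
    case 2 then show ?thesis using Low_lmult[OF g zK] by simp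
  qed
qed

lemma Low_allpow: "z ^ j \<in> Low W z K"
proof (induction j)
  case 0
  show ?case
  proof (cases "K = 0")
    case True then show ?thesis using zK by simp
  next
    case False then show ?thesis using Low_term[OF gen_one, of 0 K] by simp
  qed
next
  case (Suc j)
  have "z ^ 1 * z ^ j \<in> Low W z (1 + K)" by (rule Low_zpow[OF Suc])
  then show ?case by (intro Low_reduce) simp
qed

lemma Low_zpow_closed: "x \<in> Low W z K \<Longrightarrow> z ^ q * x \<in> Low W z K"
proof (induction q)
  case 0 then show ?case by simp
next
  case (Suc q)
  have "z ^ 1 * (z ^ q * x) \<in> Low W z (1 + K)" by (rule Low_zpow[OF Suc.IH[OF Suc.prems]])
  then show ?case by (intro Low_reduce) (simp add: mult.assoc)
qed

lemma Low_mult_closed: assumes x: "x \<in> Low W z K" and y: "y \<in> Low W z K" shows "x * y \<in> Low W z K"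
proof -
  have "x \<in> {x. x * y \<in> Low W z K}"
  proof (rule Low_induct[OF x])
    show "0 \<in> {x. x * y \<in> Low W z K}" by (simp add: Low_zero)
    show "a + b \<in> {x. x * y \<in> Low W z K}"
      if "a \<in> {x. x * y \<in> Low W z K}" "b \<in> {x. x * y \<in> Low W z K}" for a b
      using that by (simp add: distrib_right Low_add)
    fix g j assume g: "g \<in> gen_subring W"
    show "g * z ^ j \<in> {x. x * y \<in> Low W z K}"
      unfolding mem_Collect_eq mult.assoc by (rule Low_lmult[OF g Low_zpow_closed[OF y]])
  qed
  then show ?thesis by simp
qed

end
end

lemma digits_bound: "(\<forall>i<r. e i < N) \<Longrightarrow> (\<Sum>i<r. e i * N ^ i) < (N::nat) ^ r"
proof (induction r)
  case 0 then show ?case by simp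
next
  case (Suc r)
  have "(\<Sum>i<Suc r. e i * N ^ i) = (\<Sum>i<r. e i * N ^ i) + e r * N ^ r" by simp
  also have "\<dots> < N ^ r + e r * N ^ r" using Suc by simp
  also have "\<dots> = Suc (e r) * N ^ r" by simp
  also have "\<dots> \<le> N * N ^ r" using Suc.prems by (intro mult_le_mono1) auto
  finally show ?case by simp
qed

lemma digits_inj: "(\<forall>i<r. e i < N) \<Longrightarrow> (\<forall>i<r. f i < N) \<Longrightarrow>
  (\<Sum>i<r. e i * N ^ i) = (\<Sum>i<r. f i * (N::nat) ^ i) \<Longrightarrow> \<forall>i<r. e i = f i"
proof (induction r)
  case 0 then show ?case by simp
next
  case (Suc r)
  define x where "x = (\<Sum>i<r. e i * N ^ i)"
  define y where "y = (\<Sum>i<r. f i * N ^ i)"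
  have x: "x < N ^ r" unfolding x_def using Suc.prems by (intro digits_bound) auto
  have y: "y < N ^ r" unfolding y_def using Suc.prems by (intro digits_bound) auto
  have eq: "x + e r * N ^ r = y + f r * N ^ r" using Suc.prems(3) unfolding x_def y_def by simp
  have "e r = f r"
  proof (rule ccontr)
    assume "e r \<noteq> f r"
    then consider "e r < f r" | "f r < e r" by linarith
    then show False
    proof cases
      case 1
      have "x + e r * N ^ r < N ^ r + e r * N ^ r" using x by simp
      also have "\<dots> = Suc (e r) * N ^ r" by simp
      also have "\<dots> \<le> f r * N ^ r" using 1 by (intro mult_le_mono1) auto
      finally have "x + e r * N ^ r < f r * N ^ r" .
      then show False using eq by linarith
    next
      case 2
      have "y + f r * N ^ r < N ^ r + f r * N ^ r" using y by simp
      also have "\<dots> = Suc (f r) * N ^ r" by simp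
      also have "\<dots> \<le> e r * N ^ r" using 2 by (intro mult_le_mono1) auto
      finally have "y + f r * N ^ r < e r * N ^ r" .
      then show False using eq by linarith
    qed
  qed
  then have "x = y" using eq by simp
  have p1: "\<forall>i<r. e i < N" using Suc.prems(1) by simp
  have p2: "\<forall>i<r. f i < N" using Suc.prems(2) by simp
  have "\<forall>i<r. e i = f i" using Suc.IH[OF p1 p2] \<open>x = y\<close> unfolding x_def y_def by blast
  then show ?case using \<open>e r = f r\<close> by (auto simp: less_Suc_eq)
qed

lemma const_eq_0: "const x = (0::'a::zero mpoly) \<Longrightarrow> x = 0"
  unfolding const_def by (metis lookup_single_eq lookup_zero)

lemma alg_indep_0: "alg_indep 0 (a :: nat \<Rightarrow> 'a::ring_1 mpoly)"
  unfolding alg_indep_def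
proof (intro allI impI)
  fix c :: "(nat \<Rightarrow> nat) \<Rightarrow> 'a" and e
  assume fin: "finite {e. c e \<noteq> 0}" and supp: "\<forall>e. c e \<noteq> 0 \<longrightarrow> (\<forall>i\<ge>0. e i = 0)"
    and rel: "(\<Sum>e\<in>{e. c e \<noteq> 0}. const (c e) * monomial_in 0 a e) = 0"
  have sub: "{e. c e \<noteq> 0} \<subseteq> {\<lambda>_. 0}" using supp by auto
  show "c e = 0"
  proof (rule ccontr)
    assume "c e \<noteq> 0"
    then have e0: "e = (\<lambda>_. 0)" using supp by auto
    then have "{e. c e \<noteq> 0} = {\<lambda>_. 0}" using sub \<open>c e \<noteq> 0\<close> by auto
    then have "const (c (\<lambda>_. 0)) = (0 :: 'a mpoly)" using rel by (simp add: monomial_in_def)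
    then show False using \<open>c e \<noteq> 0\<close> e0 const_eq_0 by blast
  qed
qed

lemma finite_over_self: "finite_over (gen_subring X) (gen_subring X)"
  unfolding finite_over_def
proof (intro exI[of _ "{1}"] conjI ballI)
  show "finite {1}" by simp
  show "{1} \<subseteq> gen_subring X" using gen_one by simp
  fix s assume s: "s \<in> gen_subring X"
  show "\<exists>r. (\<forall>f\<in>{1}. r f \<in> gen_subring X) \<and> s = (\<Sum>f\<in>{1}. r f * f)"
    by (rule exI[of _ "\<lambda>_. s"]) (simp add: s)
qed

lemma nagata_step:
  fixes z :: "nat \<Rightarrow> 'a::division_ring mpoly"
  assumes cz: "\<forall>i<Suc l. central (z i)" and nind: "\<not> alg_indep (Suc l) z"
  shows "\<exists>w. (\<forall>j<l. central (w j)) \<and> (\<forall>j<l. w j \<in> gen_subring (z ` {..<Suc l})) \<and>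
     finite_over (gen_subring (z ` {..<Suc l})) (gen_subring (w ` {..<l}))"
proof -
  define r where "r = Suc l"
  obtain c where fin: "finite {e. c e \<noteq> 0}" and supp: "\<forall>e. c e \<noteq> 0 \<longrightarrow> (\<forall>i\<ge>r. e i = 0)"
    and rel: "(\<Sum>e\<in>{e. c e \<noteq> 0}. const (c e) * monomial_in r z e) = 0"
    and nz: "\<exists>e. c e \<noteq> 0"
    using nind unfolding alg_indep_def r_def by blast
  define E where "E = {e. c e \<noteq> 0}"
  have finE: "finite E" and neE: "E \<noteq> {}" using fin nz unfolding E_def by auto
  define N where "N = Suc (\<Sum>e\<in>E. \<Sum>i<r. e i)"
  have dig: "e i < N" if "e \<in> E" "i < r" for e i
  proof -
    have "e i \<le> (\<Sum>i<r. e i)" using that by (intro member_le_sum) auto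
    also have "\<dots> \<le> (\<Sum>e\<in>E. \<Sum>i<r. e i)" using that finE by (intro member_le_sum) auto
    finally show ?thesis unfolding N_def by simp
  qed
  define \<phi> where "\<phi> e = (\<Sum>i<r. e i * N ^ i)" for e :: "nat \<Rightarrow> nat"
  have inj: "e = e'" if "e \<in> E" "e' \<in> E" "\<phi> e = \<phi> e'" for e e'
  proof
    fix i show "e i = e' i"
    proof (cases "i < r")
      case True
      have "\<forall>i<r. e i = e' i"
        using digits_inj[of r e N e'] dig that unfolding \<phi>_def by blast
      then show ?thesis using True by blast
    next
      case False
      then have ri: "r \<le> i" by simp
      have "c e \<noteq> 0" "c e' \<noteq> 0" using that(1,2) unfolding E_def by auto
      then have "e i = 0" "e' i = 0" using supp ri by blast+
      then show ?thesis by simp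
    qed
  qed
  obtain es where es: "es \<in> E" "\<phi> es = Max (\<phi> ` E)"
  proof -
    have "Max (\<phi> ` E) \<in> \<phi> ` E" using finE neE by (intro Max_in) auto
    then show ?thesis using that by (metis (no_types, lifting) imageE)
  qed
  have esmax: "\<phi> e \<le> \<phi> es" if "e \<in> E" for e using es finE that by simp
  define K where "K = \<phi> es"
  define z0 where "z0 = z 0"
  have cz0: "central z0" using cz unfolding z0_def by auto
  define w where "w j = z (Suc j) - z0 ^ (N ^ Suc j)" for j
  define W where "W = w ` {..<l}"
  have wW: "w j \<in> gen_subring W" if "j < l" for j using that unfolding W_def by (auto intro: gen_elem)
  have Npos: "0 < N" unfolding N_def by simp
  have monz: "MonP W z0 (N ^ i) (z i)" if "i < r" for i
  proof (cases i)
    case 0 then show ?thesis using Mon_pow[OF cz0, of W 1] unfolding z0_def by simp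
  next
    case (Suc j)
    then have "j < l" using that unfolding r_def by simp
    have "z i = w j + z0 ^ (N ^ i)" unfolding w_def Suc by simp
    then show ?thesis using Mon_shift[OF cz0 wW[OF \<open>j < l\<close>], of "N ^ i"] Npos by simp
  qed
  have monpow: "MonP W z0 (e i * N ^ i) (z i ^ e i)" if "i < r" for i e
    using Mon_power[OF cz0 monz[OF that]] .
  have monprod: "MonP W z0 (\<Sum>i<r'. e i * N ^ i) (prod_list (map (\<lambda>i. z i ^ e i) [0..<r']))"
    if "r' \<le> r" for r' e
    using that
  proof (induction r')
    case 0 then show ?case using Mon_pow[OF cz0, of W 0] by simp
  next
    case (Suc r')
    have "MonP W z0 ((\<Sum>i<r'. e i * N ^ i) + e r' * N ^ r')
            (prod_list (map (\<lambda>i. z i ^ e i) [0..<r']) * z r' ^ e r')"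
      using Suc by (intro Mon_mult[OF cz0]) (auto intro: monpow)
    then show ?case by simp
  qed
  have monE: "MonP W z0 (\<phi> e) (monomial_in r z e)" for e
    unfolding \<phi>_def monomial_in_def using monprod[of r e] by simp
  define mono where "mono e = monomial_in r z e" for e
  define rest where "rest = (\<Sum>e\<in>E - {es}. const (c e) * mono e)"
  have rest: "rest \<in> Low W z0 K"
    unfolding rest_def
  proof (rule Low_sum[OF cz0])
    show "finite (E - {es})" using finE by simp
    fix e assume e: "e \<in> E - {es}"
    then have "\<phi> e < K" using esmax[of e] inj[of e es] es unfolding K_def by force
    then have "mono e \<in> Low W z0 K" unfolding mono_def by (rule Mon_Low[OF cz0 monE])
    then show "const (c e) * mono e \<in> Low W z0 K" by (rule Low_lmult[OF cz0 gen_const])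
  qed
  have "0 = (\<Sum>e\<in>E. const (c e) * mono e)" using rel unfolding E_def mono_def by simp
  also have "\<dots> = const (c es) * mono es + rest"
    unfolding rest_def using finE es(1) by (simp add: sum.remove)
  finally have r0: "const (c es) * mono es = - rest" by (simp add: eq_neg_iff_add_eq_0)
  have ces: "c es \<noteq> 0" using es(1) unfolding E_def by simp
  have "mono es = const (inverse (c es)) * (const (c es) * mono es)"
    using ces by (simp add: mult.assoc[symmetric] const_mult_const const_one)
  also have "\<dots> = const (inverse (c es)) * (- rest)" by (simp add: r0)
  finally have mes: "mono es \<in> Low W z0 K"
    using Low_lmult[OF cz0 gen_const Low_neg[OF cz0 rest]] by simp
  have "mono es - z0 ^ K \<in> Low W z0 K" using monE[of es] unfolding mono_def K_def by (simp add: MonP_def[OF cz0])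
  then have zK: "z0 ^ K \<in> Low W z0 K"
    using Low_diff[OF cz0 mes] by fastforce
  have allp: "z0 ^ j \<in> Low W z0 K" for j by (rule Low_allpow[OF cz0 zK])
  define S where "S = gen_subring (z ` {..<Suc l})"
  have z0S: "z0 \<in> S" unfolding S_def z0_def by (auto intro: gen_elem)
  have wS: "w j \<in> S" if "j < l" for j
    unfolding w_def S_def z0_def using that by (intro gen_diff gen_pow gen_elem) auto
  have SLow: "S \<subseteq> Low W z0 K"
    unfolding S_def
  proof (rule gen_least)
    show "const d \<in> Low W z0 K" for d
      using Low_lmult[OF cz0 gen_const allp[of 0]] by simp
    show "z ` {..<Suc l} \<subseteq> Low W z0 K"
    proof
      fix x assume "x \<in> z ` {..<Suc l}"
      then obtain i where i: "i < Suc l" "x = z i" by auto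
      show "x \<in> Low W z0 K"
      proof (cases i)
        case 0 then show ?thesis using i allp[of 1] unfolding z0_def by simp
      next
        case (Suc j)
        then have j: "j < l" using i by simp
        have "x = w j * z0 ^ 0 + z0 ^ (N ^ Suc j)" unfolding w_def i Suc by simp
        moreover have "w j * z0 ^ 0 \<in> Low W z0 K" by (rule Low_lmult[OF cz0 wW[OF j] allp])
        ultimately show ?thesis using Low_add[OF cz0 _ allp] by simp
      qed
    qed
    show "p + q \<in> Low W z0 K" if "p \<in> Low W z0 K" "q \<in> Low W z0 K" for p q
      using that by (rule Low_add[OF cz0])
    show "- p \<in> Low W z0 K" if "p \<in> Low W z0 K" for p
      using that by (rule Low_neg[OF cz0])
    show "p * q \<in> Low W z0 K" if "p \<in> Low W z0 K" "q \<in> Low W z0 K" for p q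
      using that by (rule Low_mult_closed[OF cz0 zK])
  qed
  have fo: "finite_over S (gen_subring W)"
    unfolding finite_over_iff
  proof (intro exI conjI)
    show "finite ((\<lambda>j. z0 ^ j) ` {..<K})" by simp
    show "(\<lambda>j. z0 ^ j) ` {..<K} \<subseteq> S" using z0S unfolding S_def by (auto intro: gen_pow)
    show "S \<subseteq> lspan (gen_subring W) ((\<lambda>j. z0 ^ j) ` {..<K})" using SLow unfolding Low_def .
  qed
  have cw: "central (w j)" if "j < l" for j
    unfolding w_def using cz that cz0 by (intro central_diff central_pow) auto
  show ?thesis
    using cw wS fo unfolding S_def W_def by blast
qed

lemma NN:
  "\<forall>z :: nat \<Rightarrow> 'a::division_ring mpoly. (\<forall>i<r. central (z i)) \<longrightarrow>
    (\<exists>m a. (\<forall>i<m. a i \<in> gen_subring (z ` {..<r}) \<and> central (a i)) \<and> alg_indep m a \<and>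
       finite_over (gen_subring (z ` {..<r})) (gen_subring (a ` {..<m})))"
proof (induction r)
  case 0
  show ?case
  proof (intro allI impI)
    fix z :: "nat \<Rightarrow> 'a mpoly"
    show "\<exists>m a. (\<forall>i<m. a i \<in> gen_subring (z ` {..<0}) \<and> central (a i)) \<and> alg_indep m a \<and>
       finite_over (gen_subring (z ` {..<0})) (gen_subring (a ` {..<m}))"
      using alg_indep_0[of z] finite_over_self[of "z ` {..<0}"] by blast
  qed
next
  case (Suc l)
  show ?case
  proof (intro allI impI)
    fix z :: "nat \<Rightarrow> 'a mpoly"
    assume cz: "\<forall>i<Suc l. central (z i)"
    show "\<exists>m a. (\<forall>i<m. a i \<in> gen_subring (z ` {..<Suc l}) \<and> central (a i)) \<and> alg_indep m a \<and>
       finite_over (gen_subring (z ` {..<Suc l})) (gen_subring (a ` {..<m}))"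
    proof (cases "alg_indep (Suc l) z")
      case True
      have "\<forall>i<Suc l. z i \<in> gen_subring (z ` {..<Suc l}) \<and> central (z i)"
        using cz by (auto intro: gen_elem)
      then show ?thesis using True finite_over_self[of "z ` {..<Suc l}"] by blast
    next
      case False
      obtain w where cw: "\<forall>j<l. central (w j)" and wS: "\<forall>j<l. w j \<in> gen_subring (z ` {..<Suc l})"
        and fo: "finite_over (gen_subring (z ` {..<Suc l})) (gen_subring (w ` {..<l}))"
        using nagata_step[OF cz False] by blast
      obtain m a where a: "\<forall>i<m. a i \<in> gen_subring (w ` {..<l}) \<and> central (a i)"
        and ai: "alg_indep m a" and fo2: "finite_over (gen_subring (w ` {..<l})) (gen_subring (a ` {..<m}))"
        using Suc.IH cw by blast
      have sub: "gen_subring (w ` {..<l}) \<subseteq> gen_subring (z ` {..<Suc l})"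
        using wS by (intro gen_closure) auto
      have "finite_over (gen_subring (z ` {..<Suc l})) (gen_subring (a ` {..<m}))"
        by (rule finite_over_trans[OF fo fo2 sub gen_mult])
      moreover have "\<forall>i<m. a i \<in> gen_subring (z ` {..<Suc l}) \<and> central (a i)"
        using a sub by blast
      ultimately show ?thesis using ai by blast
    qed
  qed
qed

theorem proposition4p6:
  fixes n :: nat and A :: "('a::division_ring) mpoly set"
  assumes "centrally_finite TYPE('a)"
    and "finite A"
    and "A \<subseteq> poly_ring n"
  shows "centrally_normalizable (gen_subring A)"
proof -
  have "\<forall>x\<in>A. \<exists>Z. finite Z \<and> Z \<subseteq> gen_subring A \<and> (\<forall>z\<in>Z. central z) \<and> x \<in> gen_subring Z"
  proof
    fix x assume "x \<in> A"
    then have xS: "x \<in> gen_subring A" by (rule gen_elem)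
    show "\<exists>Z. finite Z \<and> Z \<subseteq> gen_subring A \<and> (\<forall>z\<in>Z. central z) \<and> x \<in> gen_subring Z"
      using central_gen[of "Poly_Mapping.keys x" A, rule_format, OF finite_keys xS order_refl] .
  qed
  then obtain Zf where Zf: "\<And>x. x \<in> A \<Longrightarrow> finite (Zf x) \<and> Zf x \<subseteq> gen_subring A \<and>
      (\<forall>z\<in>Zf x. central z) \<and> x \<in> gen_subring (Zf x)"
    by metis
  define Z where "Z = \<Union>(Zf ` A)"
  have finZ: "finite Z" unfolding Z_def using assms(2) Zf by auto
  have ZS: "Z \<subseteq> gen_subring A" unfolding Z_def using Zf by auto
  have cZ: "\<forall>z\<in>Z. central z" unfolding Z_def using Zf by auto
  have AZ: "A \<subseteq> gen_subring Z"
  proof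
    fix x assume x: "x \<in> A"
    have "gen_subring (Zf x) \<subseteq> gen_subring Z" unfolding Z_def using x by (intro gen_mono) auto
    then show "x \<in> gen_subring Z" using Zf[OF x] by auto
  qed
  have eqS: "gen_subring Z = gen_subring A"
    using gen_closure[OF ZS] gen_closure[OF AZ] by auto
  obtain r and z :: "nat \<Rightarrow> 'a mpoly" where zr: "Z = z ` {i. i < r}"
    using finite_imp_nat_seg_image_inj_on[OF finZ] by blast
  have Zr: "Z = z ` {..<r}" using zr by (simp add: lessThan_def)
  have czr: "\<forall>i<r. central (z i)" using cZ Zr by auto
  obtain m a where a: "\<forall>i<m. a i \<in> gen_subring (z ` {..<r}) \<and> central (a i)"
    and ai: "alg_indep m a" and fo: "finite_over (gen_subring (z ` {..<r})) (gen_subring (a ` {..<m}))"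
    using NN[of r] czr by blast
  show ?thesis
    unfolding centrally_normalizable_def
  proof (intro exI conjI)
    show "\<forall>i<m. a i \<in> gen_subring A" using a eqS Zr by auto
    show "\<forall>i<m. \<forall>j<m. a i * a j = a j * a i" using a by (auto intro: centralD)
    show "\<forall>i<m. \<forall>b. a i * const b = const b * a i" using a by (auto intro: centralD)
    show "alg_indep m a" by (rule ai)
    show "finite_over (gen_subring A) (gen_subring (a ` {..<m}))" using fo eqS Zr by simp
  qed
qed

end
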